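(* Let $0<\alpha<1$ and $p,q>0$. If $\mathrm{Tr}\,R_{\alpha,p}(A,B)\le\mathrm{Tr}\,\mathcal{A}_{\alpha,q}(A,B)$ holds for all positive definite $2\times2$ matrices $A,B$, then $\min\{1,\alpha(1-\alpha)p\}\le q$.
   Context: For positive definite $A,B$: $R_{\alpha,p}(A,B):=\bigl(A^{\frac{1-\alpha}{2}p}B^{\alpha p}A^{\frac{1-\alpha}{2}p}\bigr)^{1/p}$ and $\mathcal{A}_{\alpha,q}(A,B):=((1-\alpha)A^q+\alpha B^q)^{1/q}$. $\mathrm{Tr}$ is the usual trace. *)

theory Defs
  imports "HOL-Analysis.Analysis"
begin

definition cmat_adj :: "complex^'n^'n \<Rightarrow> complex^'n^'n" where
  "cmat_adj A = (\<chi> i j. cnj (A $ j $ i))"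

definition cmat_trace :: "complex^'n^'n \<Rightarrow> complex" where
  "cmat_trace A = (\<Sum>i\<in>UNIV. A $ i $ i)"

definition cmat_diag :: "('n \<Rightarrow> complex) \<Rightarrow> complex^'n^'n" where
  "cmat_diag d = (\<chi> i j. if i = j then d i else 0)"

definition cmat_unitary :: "complex^'n^'n \<Rightarrow> bool" where
  "cmat_unitary U \<longleftrightarrow> U ** cmat_adj U = mat 1 \<and> cmat_adj U ** U = mat 1"

definition cmat_hermitian :: "complex^'n^'n \<Rightarrow> bool" where
  "cmat_hermitian A \<longleftrightarrow> cmat_adj A = A"

definition cmat_posdef :: "complex^'n^'n \<Rightarrow> bool" where
  "cmat_posdef A \<longleftrightarrow> cmat_hermitian A \<and>
     (\<forall>x::complex^'n. x \<noteq> 0 \<longrightarrow> Re (\<Sum>i\<in>UNIV. \<Sum>j\<in>UNIV. cnj (x $ i) * A $ i $ j * x $ j) > 0)"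

text \<open>Real power \<open>A powr t\<close> of a positive definite matrix: if \<open>A = U diag(d) U*\<close>
  with U unitary and all \<open>d i > 0\<close>, then \<open>A^t = U diag(d^t) U*\<close>
  (well defined by uniqueness of the functional calculus).\<close>
definition cmat_powr :: "complex^'n^'n \<Rightarrow> real \<Rightarrow> complex^'n^'n" where
  "cmat_powr A t = (THE B. \<exists>U d. cmat_unitary U \<and> (\<forall>i. d i > 0) \<and>
       A = U ** cmat_diag (\<lambda>i. complex_of_real (d i)) ** cmat_adj U \<and>
       B = U ** cmat_diag (\<lambda>i. complex_of_real (d i powr t)) ** cmat_adj U)"

definition R_mean :: "real \<Rightarrow> real \<Rightarrow> complex^'n^'n \<Rightarrow> complex^'n^'n \<Rightarrow> complex^'n^'n" where
  "R_mean \<alpha> p A B = cmat_powr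
     (cmat_powr A ((1 - \<alpha>) * p / 2) ** cmat_powr B (\<alpha> * p) ** cmat_powr A ((1 - \<alpha>) * p / 2))
     (1 / p)"

definition A_mean :: "real \<Rightarrow> real \<Rightarrow> complex^'n^'n \<Rightarrow> complex^'n^'n \<Rightarrow> complex^'n^'n" where
  "A_mean \<alpha> q A B = cmat_powr ((1 - \<alpha>) *\<^sub>R cmat_powr A q + \<alpha> *\<^sub>R cmat_powr B q) (1 / q)"

end

theory Submission
  imports Defs
begin


lemma diag_mul_right: "(M ** cmat_diag d) $ i $ j = M $ i $ j * d j"
  unfolding cmat_diag_def matrix_matrix_mult_def
  by (simp add: if_distrib[where f="\<lambda>x. _ * x"] sum.delta' cong: if_cong)

lemma diag_mul_left: "(cmat_diag d ** M) $ i $ j = d i * M $ i $ j"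
  unfolding cmat_diag_def matrix_matrix_mult_def
  by (simp add: if_distrib[where f="\<lambda>x. x * _"] sum.delta cong: if_cong)

lemma adj_mul: "cmat_adj (A ** B) = cmat_adj B ** cmat_adj A"
  unfolding cmat_adj_def matrix_matrix_mult_def
  by (simp add: vec_eq_iff mult.commute)

lemma powr_unique:
  fixes U V :: "complex^'n^'n"
  assumes U: "cmat_unitary U" and V: "cmat_unitary V"
    and eq: "U ** cmat_diag (\<lambda>i. complex_of_real (d i)) ** cmat_adj U
           = V ** cmat_diag (\<lambda>i. complex_of_real (e i)) ** cmat_adj V"
  shows "U ** cmat_diag (\<lambda>i. complex_of_real (f (d i))) ** cmat_adj U
           = V ** cmat_diag (\<lambda>i. complex_of_real (f (e i))) ** cmat_adj V"
proof -
  define W where "W = cmat_adj V ** U"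
  define D where "D = cmat_diag (\<lambda>i. complex_of_real (d i))"
  define E where "E = cmat_diag (\<lambda>i. complex_of_real (e i))"
  define FD where "FD = cmat_diag (\<lambda>i. complex_of_real (f (d i)))"
  define FE where "FE = cmat_diag (\<lambda>i. complex_of_real (f (e i)))"
  have uu: "cmat_adj U ** U = mat 1" "U ** cmat_adj U = mat 1" using U by (auto simp: cmat_unitary_def)
  have vv: "cmat_adj V ** V = mat 1" "V ** cmat_adj V = mat 1" using V by (auto simp: cmat_unitary_def)
  have "W ** D = cmat_adj V ** (U ** D ** cmat_adj U) ** U"
    by (simp add: W_def uu matrix_mul_rid matrix_mul_lid flip: matrix_mul_assoc)
  also have "\<dots> = cmat_adj V ** (V ** E ** cmat_adj V) ** U" using eq by (simp add: D_def E_def)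
  also have "\<dots> = E ** W" by (simp add: W_def matrix_mul_assoc flip: matrix_mul_assoc[of "cmat_adj V" V] add: vv matrix_mul_lid)
  finally have WD: "W ** D = E ** W" .
  have WFij: "(W ** FD) $ i $ j = (FE ** W) $ i $ j" for i j
  proof -
    have "(W ** D) $ i $ j = (E ** W) $ i $ j" using WD by simp
    hence "W $ i $ j * of_real (d j) = of_real (e i) * W $ i $ j"
      by (simp add: D_def E_def diag_mul_right diag_mul_left)
    hence "W $ i $ j = 0 \<or> d j = e i" by (auto simp: mult.commute)
    thus "(W ** FD) $ i $ j = (FE ** W) $ i $ j"
      by (auto simp: FD_def FE_def diag_mul_right diag_mul_left mult.commute)
  qed
  have WF: "W ** FD = FE ** W" using WFij by (simp add: vec_eq_iff)
  have vv2: "V ** (cmat_adj V ** X) = X" for X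
    by (simp add: matrix_mul_assoc vv matrix_mul_lid)
  have uu2: "X ** cmat_adj U ** U = X" for X
    by (simp add: uu matrix_mul_rid flip: matrix_mul_assoc)
  have "U ** FD ** cmat_adj U = V ** W ** FD ** cmat_adj U"
    by (simp add: W_def flip: matrix_mul_assoc add: vv2)
  also have "\<dots> = V ** FE ** W ** cmat_adj U" by (metis matrix_mul_assoc WF)
  also have "\<dots> = V ** FE ** cmat_adj V" by (simp add: W_def uu matrix_mul_rid matrix_mul_lid flip: matrix_mul_assoc)
  finally show ?thesis by (simp add: FD_def FE_def)
qed

lemma cmat_powr_eq:
  assumes U: "cmat_unitary U" and d: "\<And>i. d i > 0"
    and A: "A = U ** cmat_diag (\<lambda>i. complex_of_real (d i)) ** cmat_adj U"
  shows "cmat_powr A t = U ** cmat_diag (\<lambda>i. complex_of_real (d i powr t)) ** cmat_adj U"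
  unfolding cmat_powr_def
proof (rule the_equality)
  show "\<exists>Ua da. cmat_unitary Ua \<and> (\<forall>i. 0 < da i) \<and>
      A = Ua ** cmat_diag (\<lambda>i. complex_of_real (da i)) ** cmat_adj Ua \<and>
      U ** cmat_diag (\<lambda>i. complex_of_real (d i powr t)) ** cmat_adj U =
      Ua ** cmat_diag (\<lambda>i. complex_of_real (da i powr t)) ** cmat_adj Ua"
    using U d A by blast
next
  fix B assume "\<exists>Ua da. cmat_unitary Ua \<and> (\<forall>i. 0 < da i) \<and>
      A = Ua ** cmat_diag (\<lambda>i. complex_of_real (da i)) ** cmat_adj Ua \<and>
      B = Ua ** cmat_diag (\<lambda>i. complex_of_real (da i powr t)) ** cmat_adj Ua"
  then obtain V e where V: "cmat_unitary V" "A = V ** cmat_diag (\<lambda>i. complex_of_real (e i)) ** cmat_adj V"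
     "B = V ** cmat_diag (\<lambda>i. complex_of_real (e i powr t)) ** cmat_adj V" by blast
  show "B = U ** cmat_diag (\<lambda>i. complex_of_real (d i powr t)) ** cmat_adj U"
    using powr_unique[OF V(1) U, of e d "\<lambda>x. x powr t"] V A by simp
qed



definition mk2 :: "complex \<Rightarrow> complex \<Rightarrow> complex \<Rightarrow> complex \<Rightarrow> complex^2^2" where
  "mk2 a b c d = (\<chi> i j. if i = 1 then (if j = 1 then a else b) else (if j = 1 then c else d))"

lemma two_neq: "(2::2) \<noteq> 1" by simp

lemma mk2_nth [simp]: "mk2 a b c d $ 1 $ 1 = a" "mk2 a b c d $ 1 $ 2 = b"
  "mk2 a b c d $ 2 $ 1 = c" "mk2 a b c d $ 2 $ 2 = d"
  by (simp_all add: mk2_def)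

lemma mk2_eq_iff: "mk2 a b c d = mk2 a' b' c' d' \<longleftrightarrow> a = a' \<and> b = b' \<and> c = c' \<and> d = d'"
  by (auto simp: vec_eq_iff forall_2)

lemma mk2_ext: "(M::complex^2^2) = mk2 (M$1$1) (M$1$2) (M$2$1) (M$2$2)"
  by (auto simp: vec_eq_iff forall_2)

lemma mk2_mult [simp]: "mk2 a b c d ** mk2 a' b' c' d' =
   mk2 (a*a' + b*c') (a*b' + b*d') (c*a' + d*c') (c*b' + d*d')"
  by (auto simp: vec_eq_iff forall_2 matrix_matrix_mult_def sum_2)

lemma mk2_adj [simp]: "cmat_adj (mk2 a b c d) = mk2 (cnj a) (cnj c) (cnj b) (cnj d)"
  by (auto simp: vec_eq_iff forall_2 cmat_adj_def)

lemma mk2_diag: "cmat_diag f = mk2 (f 1) 0 0 (f 2)"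
  by (auto simp: vec_eq_iff forall_2 cmat_diag_def)

lemma mk2_one: "(mat 1 :: complex^2^2) = mk2 1 0 0 1"
  by (auto simp: vec_eq_iff forall_2 mat_def)

lemma mk2_trace [simp]: "cmat_trace (mk2 a b c d) = a + d"
  by (simp add: cmat_trace_def sum_2)

lemma mk2_scaleR [simp]: "r *\<^sub>R mk2 a b c d = mk2 (r *\<^sub>R a) (r *\<^sub>R b) (r *\<^sub>R c) (r *\<^sub>R d)"
  by (auto simp: vec_eq_iff forall_2)

lemma mk2_plus [simp]: "mk2 a b c d + mk2 a' b' c' d' = mk2 (a+a') (b+b') (c+c') (d+d')"
  by (auto simp: vec_eq_iff forall_2)

definition rs :: "real \<Rightarrow> real \<Rightarrow> real \<Rightarrow> complex^2^2" where
  "rs a b d = mk2 (of_real a) (of_real b) (of_real b) (of_real d)"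

definition rot :: "real \<Rightarrow> real \<Rightarrow> complex^2^2" where
  "rot c s = mk2 (of_real c) (of_real (-s)) (of_real s) (of_real c)"

lemma rot_unitary: assumes "c\<^sup>2 + s\<^sup>2 = 1" shows "cmat_unitary (rot c s)"
proof -
  have e: "complex_of_real c * complex_of_real c + complex_of_real s * complex_of_real s = 1"
    using assms by (metis of_real_add of_real_mult power2_eq_square of_real_1)
  show ?thesis
    unfolding cmat_unitary_def rot_def mk2_one using e
    by (simp add: mk2_eq_iff algebra_simps)
qed

lemma rot_conj: "rot c s ** cmat_diag (\<lambda>i. complex_of_real (if i = 1 then l1 else l2)) ** cmat_adj (rot c s)
   = rs (c\<^sup>2 * l1 + s\<^sup>2 * l2) (c * s * (l1 - l2)) (s\<^sup>2 * l1 + c\<^sup>2 * l2)"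
  unfolding rot_def rs_def mk2_diag
  by (simp add: mk2_eq_iff algebra_simps power2_eq_square)

lemma rs_scaleR [simp]: "r *\<^sub>R rs a b d = rs (r*a) (r*b) (r*d)"
  unfolding rs_def mk2_scaleR by (simp add: scaleR_conv_of_real)

lemma rs_plus [simp]: "rs a b d + rs a' b' d' = rs (a+a') (b+b') (d+d')"
  by (simp add: rs_def)

lemma rs_mult [simp]: "rs a b d ** rs a' b' d' =
   mk2 (of_real (a*a' + b*b')) (of_real (a*b' + b*d')) (of_real (b*a' + d*b')) (of_real (b*b' + d*d'))"
  by (simp add: rs_def)

lemma rs_trace [simp]: "cmat_trace (rs a b d) = of_real (a + d)"
  by (simp add: rs_def)

lemma rs_eq_iff: "rs a b d = rs a' b' d' \<longleftrightarrow> a = a' \<and> b = b' \<and> d = d'"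
  by (simp add: rs_def mk2_eq_iff)

lemma mk2_rs: "mk2 (of_real a) (of_real b) (of_real b) (of_real d) = rs a b d"
  by (simp add: rs_def)



definition evp :: "real \<Rightarrow> real \<Rightarrow> real \<Rightarrow> real" where
  "evp a b d = (a + d + sqrt ((a - d)\<^sup>2 + 4 * b\<^sup>2)) / 2"
definition evm :: "real \<Rightarrow> real \<Rightarrow> real \<Rightarrow> real" where
  "evm a b d = (a + d - sqrt ((a - d)\<^sup>2 + 4 * b\<^sup>2)) / 2"

lemma rs_spectral:
  "\<exists>c s. c\<^sup>2 + s\<^sup>2 = 1 \<and>
     rs a b d = rot c s ** cmat_diag (\<lambda>i. complex_of_real (if i = 1 then evp a b d else evm a b d)) ** cmat_adj (rot c s)"
proof -
  define \<rho> where "\<rho> = sqrt ((a - d)\<^sup>2 + 4 * b\<^sup>2)"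
  have \<rho>0: "\<rho> \<ge> 0" by (simp add: \<rho>_def)
  have \<rho>sq: "\<rho>\<^sup>2 = (a - d)\<^sup>2 + 4 * b\<^sup>2" by (simp add: \<rho>_def)
  have ep: "evp a b d = (a + d + \<rho>)/2" and em: "evm a b d = (a + d - \<rho>)/2"
    by (simp_all add: evp_def evm_def \<rho>_def)
  show ?thesis
  proof (cases "\<rho> = 0")
    case True
    hence "(a - d)\<^sup>2 + 4 * b\<^sup>2 = 0" using \<rho>sq by simp
    hence "a = d" "b = 0" by (smt (verit) power2_less_eq_zero_iff zero_le_power2)+
    have "rs a b d = rot 1 0 ** cmat_diag (\<lambda>i. complex_of_real (if i = 1 then evp a b d else evm a b d)) ** cmat_adj (rot 1 0)"
      unfolding rot_conj ep em rs_eq_iff using True \<open>a = d\<close> \<open>b = 0\<close> by simp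
    thus ?thesis by (intro exI[of _ 1] exI[of _ 0]) simp
  next
    case False
    hence \<rho>p: "\<rho> > 0" using \<rho>0 by simp
    have "((a - d)/\<rho>)\<^sup>2 + (2*b/\<rho>)\<^sup>2 = ((a - d)\<^sup>2 + (2*b)\<^sup>2) / \<rho>\<^sup>2"
      by (simp add: power_divide add_divide_distrib)
    also have "\<dots> = 1" using \<rho>p \<rho>sq by (simp add: power_mult_distrib) (metis \<rho>p \<rho>sq less_irrefl zero_less_power)
    finally have "((a - d)/\<rho>)\<^sup>2 + (2*b/\<rho>)\<^sup>2 = 1" .
    then obtain \<psi> where \<psi>: "(a - d)/\<rho> = cos \<psi>" "2*b/\<rho> = sin \<psi>" by (metis sincos_total_2pi)
    define c where "c = cos (\<psi>/2)"
    define s where "s = sin (\<psi>/2)"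
    have cs1: "c\<^sup>2 + s\<^sup>2 = 1" by (simp add: c_def s_def)
    have cosd: "cos \<psi> = c\<^sup>2 - s\<^sup>2" using cos_double[of "\<psi>/2"] by (simp add: c_def s_def)
    have sind: "sin \<psi> = 2 * s * c" using sin_double[of "\<psi>/2"] by (simp add: c_def s_def)
    have e1: "a - d = \<rho> * (c\<^sup>2 - s\<^sup>2)" using \<psi>(1) cosd \<rho>p by (simp add: field_simps)
    have e2: "2 * b = \<rho> * (2 * s * c)" using \<psi>(2) sind \<rho>p by (simp add: field_simps)
    have "c\<^sup>2 * ((a + d + \<rho>)/2) + s\<^sup>2 * ((a + d - \<rho>)/2) = a"
      using e1 cs1 by algebra
    moreover have "c * s * ((a + d + \<rho>)/2 - (a + d - \<rho>)/2) = b"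
    proof -
      have "(a + d + \<rho>)/2 - (a + d - \<rho>)/2 = \<rho>" by (simp add: field_simps)
      hence "c * s * ((a + d + \<rho>)/2 - (a + d - \<rho>)/2) = c * s * \<rho>" by (simp only:)
      also have "\<dots> = b" using e2 by (simp add: mult_ac)
      finally show ?thesis .
    qed
    moreover have "s\<^sup>2 * ((a + d + \<rho>)/2) + c\<^sup>2 * ((a + d - \<rho>)/2) = d"
      using e1 cs1 by algebra
    ultimately show ?thesis using cs1
      by (intro exI[of _ c] exI[of _ s]) (simp add: rot_conj ep em rs_eq_iff)
  qed
qed

lemma ev_pos:
  assumes "a + d > 0" "a * d - b\<^sup>2 > 0"
  shows "evm a b d > 0" "evp a b d > 0"
proof -
  have "(a - d)\<^sup>2 + 4 * b\<^sup>2 < (a + d)\<^sup>2" using assms(2) by (simp add: power2_eq_square algebra_simps)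
  hence "sqrt ((a - d)\<^sup>2 + 4 * b\<^sup>2) < a + d" using assms(1)
    by (metis abs_of_pos real_sqrt_abs real_sqrt_less_mono)
  moreover have "sqrt ((a - d)\<^sup>2 + 4 * b\<^sup>2) \<ge> 0" by simp
  ultimately have "a + d - sqrt ((a - d)\<^sup>2 + 4 * b\<^sup>2) > 0" "a + d + sqrt ((a - d)\<^sup>2 + 4 * b\<^sup>2) > 0"
    by linarith+
  thus "evm a b d > 0" "evp a b d > 0" unfolding evm_def evp_def by simp_all
qed

lemma rs_powr:
  assumes "a + d > 0" "a * d - b\<^sup>2 > 0"
  shows "\<exists>c s. c\<^sup>2 + s\<^sup>2 = 1 \<and> cmat_powr (rs a b d) t =
     rot c s ** cmat_diag (\<lambda>i. complex_of_real (if i = 1 then evp a b d powr t else evm a b d powr t)) ** cmat_adj (rot c s)"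
proof -
  obtain c s where cs: "c\<^sup>2 + s\<^sup>2 = 1" and
    e: "rs a b d = rot c s ** cmat_diag (\<lambda>i. complex_of_real (if i = 1 then evp a b d else evm a b d)) ** cmat_adj (rot c s)"
    using rs_spectral by blast
  have "cmat_powr (rs a b d) t = rot c s ** cmat_diag (\<lambda>i. complex_of_real ((if i = 1 then evp a b d else evm a b d) powr t)) ** cmat_adj (rot c s)"
    by (rule cmat_powr_eq[OF rot_unitary[OF cs] _ e]) (use ev_pos[OF assms] in auto)
  also have "(\<lambda>i. complex_of_real ((if i = 1 then evp a b d else evm a b d) powr t)) =
       (\<lambda>i. complex_of_real (if i = 1 then evp a b d powr t else evm a b d powr t))" by auto
  finally show ?thesis using cs by blast
qed

lemma rs_trace_powr:
  assumes "a + d > 0" "a * d - b\<^sup>2 > 0"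
  shows "Re (cmat_trace (cmat_powr (rs a b d) t)) = evp a b d powr t + evm a b d powr t"
proof -
  obtain c s where cs: "c\<^sup>2 + s\<^sup>2 = 1" and e: "cmat_powr (rs a b d) t =
     rot c s ** cmat_diag (\<lambda>i. complex_of_real (if i = 1 then evp a b d powr t else evm a b d powr t)) ** cmat_adj (rot c s)"
    using rs_powr[OF assms] by blast
  have "c\<^sup>2 * X + s\<^sup>2 * Y + (s\<^sup>2 * X + c\<^sup>2 * Y) = X + Y" for X Y :: real
    using cs by (metis add.commute combine_common_factor distrib_right group_cancel.add2 mult_1)
  thus ?thesis unfolding e rot_conj by simp
qed

lemma quad_pos:
  fixes a b d x y :: real
  assumes "a > 0" "a * d - b\<^sup>2 > 0"
  shows "a * x\<^sup>2 + 2 * b * x * y + d * y\<^sup>2 \<ge> 0"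
    and "a * x\<^sup>2 + 2 * b * x * y + d * y\<^sup>2 = 0 \<Longrightarrow> x = 0 \<and> y = 0"
proof -
  have k: "a * (a * x\<^sup>2 + 2 * b * x * y + d * y\<^sup>2) = (a*x + b*y)\<^sup>2 + (a*d - b\<^sup>2) * y\<^sup>2"
    by (simp add: power2_eq_square algebra_simps)
  have "(a*x + b*y)\<^sup>2 + (a*d - b\<^sup>2) * y\<^sup>2 \<ge> 0" using assms by simp
  thus g: "a * x\<^sup>2 + 2 * b * x * y + d * y\<^sup>2 \<ge> 0" using k assms(1)
    by (metis zero_le_mult_iff not_less)
  assume z: "a * x\<^sup>2 + 2 * b * x * y + d * y\<^sup>2 = 0"
  hence "(a*x + b*y)\<^sup>2 + (a*d - b\<^sup>2) * y\<^sup>2 = 0" using k by simp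
  hence "(a*d - b\<^sup>2) * y\<^sup>2 = 0" "(a*x + b*y)\<^sup>2 = 0" using assms
    by (smt (verit) mult_nonneg_nonneg zero_le_power2)+
  hence "y = 0" using assms by simp
  moreover have "x = 0" using \<open>(a*x + b*y)\<^sup>2 = 0\<close> \<open>y = 0\<close> assms by simp
  ultimately show "x = 0 \<and> y = 0" by simp
qed

lemma re_term: "Re (cnj z * complex_of_real a * w) = a * (Re z * Re w + Im z * Im w)"
  by (simp add: algebra_simps)

lemma rs_posdef:
  assumes "a > 0" "a * d - b\<^sup>2 > 0"
  shows "cmat_posdef (rs a b d)"
  unfolding cmat_posdef_def
proof (intro conjI allI impI)
  show "cmat_hermitian (rs a b d)" by (simp add: cmat_hermitian_def rs_def)
  fix x :: "complex^2" assume "x \<noteq> 0"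
  hence nz: "x$1 \<noteq> 0 \<or> x$2 \<noteq> 0" by (auto simp: vec_eq_iff forall_2)
  define p1 where "p1 = Re (x$1)" define q1 where "q1 = Im (x$1)"
  define p2 where "p2 = Re (x$2)" define q2 where "q2 = Im (x$2)"
  have "Re (\<Sum>i\<in>UNIV. \<Sum>j\<in>UNIV. cnj (x $ i) * rs a b d $ i $ j * x $ j)
     = (a * p1\<^sup>2 + 2 * b * p1 * p2 + d * p2\<^sup>2) + (a * q1\<^sup>2 + 2 * b * q1 * q2 + d * q2\<^sup>2)"
    unfolding sum_2 rs_def mk2_nth plus_complex.sel re_term p1_def q1_def p2_def q2_def
    by (simp add: power2_eq_square algebra_simps)
  moreover have "\<not> (p1 = 0 \<and> p2 = 0 \<and> q1 = 0 \<and> q2 = 0)"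
    using nz by (auto simp: p1_def q1_def p2_def q2_def complex_eq_iff)
  ultimately show "Re (\<Sum>i\<in>UNIV. \<Sum>j\<in>UNIV. cnj (x $ i) * rs a b d $ i $ j * x $ j) > 0"
    using quad_pos[OF assms, of p1 p2] quad_pos[OF assms, of q1 q2]
    by (smt (verit))
qed



lemma rot_powr:
  fixes c s l1 l2 t :: real
  assumes cs: "c\<^sup>2 + s\<^sup>2 = 1" and l: "l1 > 0" "l2 > 0"
  shows "cmat_powr (rs (c\<^sup>2 * l1 + s\<^sup>2 * l2) (c * s * (l1 - l2)) (s\<^sup>2 * l1 + c\<^sup>2 * l2)) t
     = rs (c\<^sup>2 * l1 powr t + s\<^sup>2 * l2 powr t) (c * s * (l1 powr t - l2 powr t)) (s\<^sup>2 * l1 powr t + c\<^sup>2 * l2 powr t)"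
proof -
  have "cmat_powr (rs (c\<^sup>2 * l1 + s\<^sup>2 * l2) (c * s * (l1 - l2)) (s\<^sup>2 * l1 + c\<^sup>2 * l2)) t =
     rot c s ** cmat_diag (\<lambda>i. complex_of_real ((if i = 1 then l1 else l2) powr t)) ** cmat_adj (rot c s)"
    by (rule cmat_powr_eq[OF rot_unitary[OF cs]]) (use l in \<open>auto simp: rot_conj\<close>)
  also have "(\<lambda>i. complex_of_real ((if i = 1 then l1 else l2) powr t)) =
       (\<lambda>i. complex_of_real (if i = 1 then l1 powr t else l2 powr t))" by auto
  finally show ?thesis by (simp add: rot_conj)
qed

lemma powA: assumes "\<delta> > 0" shows "cmat_powr (rs 1 0 \<delta>) t = rs 1 0 (\<delta> powr t)"
  using rot_powr[of 1 0 1 \<delta> t] assms by simp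

lemma powB: assumes "c\<^sup>2 + s\<^sup>2 = 1" "\<delta> > 0"
  shows "cmat_powr (rs (c\<^sup>2 + s\<^sup>2 * \<delta>) (c * s * (1 - \<delta>)) (s\<^sup>2 + c\<^sup>2 * \<delta>)) t
     = rs (c\<^sup>2 + s\<^sup>2 * \<delta> powr t) (c * s * (1 - \<delta> powr t)) (s\<^sup>2 + c\<^sup>2 * \<delta> powr t)"
  using rot_powr[of c s 1 \<delta> t] assms by simp

lemma det_rot: fixes c s L :: real assumes "c\<^sup>2 + s\<^sup>2 = 1"
  shows "(c\<^sup>2 + s\<^sup>2 * L) * (s\<^sup>2 + c\<^sup>2 * L) - (c * s * (1 - L))\<^sup>2 = L"
proof -
  have "(c\<^sup>2 + s\<^sup>2 * L) * (s\<^sup>2 + c\<^sup>2 * L) - (c * s * (1 - L))\<^sup>2 = L * (c\<^sup>2 + s\<^sup>2)\<^sup>2"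
    by (simp add: power2_eq_square algebra_simps)
  thus ?thesis using assms by simp
qed

lemma pos_comb: fixes c s L :: real assumes "c\<^sup>2 + s\<^sup>2 = 1" "L > 0" shows "c\<^sup>2 + s\<^sup>2 * L > 0" "s\<^sup>2 + c\<^sup>2 * L > 0"
proof -
  show "c\<^sup>2 + s\<^sup>2 * L > 0"
  proof (cases "s = 0")
    case True thus ?thesis using assms by simp
  next
    case False hence "s\<^sup>2 * L > 0" using assms by simp
    moreover have "c\<^sup>2 \<ge> 0" by simp
    ultimately show ?thesis by linarith
  qed
  show "s\<^sup>2 + c\<^sup>2 * L > 0"
  proof (cases "c = 0")
    case True thus ?thesis using assms by simp
  next
    case False hence "c\<^sup>2 * L > 0" using assms by simp
    moreover have "s\<^sup>2 \<ge> 0" by simp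
    ultimately show ?thesis by linarith
  qed
qed

lemma sandwich: "rs 1 0 e ** rs x y z ** rs 1 0 e = rs x (e * y) (e * e * z)"
  by (simp add: rs_def mk2_eq_iff)

lemma posB: assumes "c\<^sup>2 + s\<^sup>2 = 1" "\<delta> > 0"
  shows "cmat_posdef (rs (c\<^sup>2 + s\<^sup>2 * \<delta>) (c * s * (1 - \<delta>)) (s\<^sup>2 + c\<^sup>2 * \<delta>))"
  using rs_posdef pos_comb[OF assms] det_rot[OF assms(1), of \<delta>] assms by simp

lemma posA: assumes "\<delta> > 0" shows "cmat_posdef (rs 1 0 \<delta>)"
  using rs_posdef[of 1 \<delta> 0] assms by simp

definition "Xa (\<alpha>::real) (p::real) (c::real) (s::real) (\<delta>::real) = c\<^sup>2 + s\<^sup>2 * \<delta> powr (\<alpha> * p)"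
definition "Xb (\<alpha>::real) (p::real) (c::real) (s::real) (\<delta>::real) = \<delta> powr ((1 - \<alpha>) * p / 2) * (c * s * (1 - \<delta> powr (\<alpha> * p)))"
definition "Xc (\<alpha>::real) (p::real) (c::real) (s::real) (\<delta>::real) = \<delta> powr ((1 - \<alpha>) * p / 2) * \<delta> powr ((1 - \<alpha>) * p / 2) * (s\<^sup>2 + c\<^sup>2 * \<delta> powr (\<alpha> * p))"
definition "Ya (\<alpha>::real) (q::real) (c::real) (s::real) (\<delta>::real) = (1 - \<alpha>) * 1 + \<alpha> * (c\<^sup>2 + s\<^sup>2 * \<delta> powr q)"
definition "Yb (\<alpha>::real) (q::real) (c::real) (s::real) (\<delta>::real) = (1 - \<alpha>) * 0 + \<alpha> * (c * s * (1 - \<delta> powr q))"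
definition "Yc (\<alpha>::real) (q::real) (c::real) (s::real) (\<delta>::real) = (1 - \<alpha>) * \<delta> powr q + \<alpha> * (s\<^sup>2 + c\<^sup>2 * \<delta> powr q)"

lemma X_pos:
  assumes cs: "c\<^sup>2 + s\<^sup>2 = 1" and d: "\<delta> > 0"
  shows "Xa \<alpha> p c s \<delta> + Xc \<alpha> p c s \<delta> > 0"
    "Xa \<alpha> p c s \<delta> * Xc \<alpha> p c s \<delta> - (Xb \<alpha> p c s \<delta>)\<^sup>2 > 0"
proof -
  define e where "e = \<delta> powr ((1 - \<alpha>) * p / 2)"
  define L where "L = \<delta> powr (\<alpha> * p)"
  have e: "e > 0" and L: "L > 0" using d by (auto simp: e_def L_def)
  have p1: "c\<^sup>2 + s\<^sup>2 * L > 0" "s\<^sup>2 + c\<^sup>2 * L > 0" using pos_comb[OF cs L] by auto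
  have "c\<^sup>2 + s\<^sup>2 * L + e * e * (s\<^sup>2 + c\<^sup>2 * L) > 0" using p1 e by (simp add: add_pos_pos)
  thus "Xa \<alpha> p c s \<delta> + Xc \<alpha> p c s \<delta> > 0" by (simp add: Xa_def Xc_def e_def L_def)
  have "(c\<^sup>2 + s\<^sup>2 * L) * (e * e * (s\<^sup>2 + c\<^sup>2 * L)) - (e * (c * s * (1 - L)))\<^sup>2
      = e * e * ((c\<^sup>2 + s\<^sup>2 * L) * (s\<^sup>2 + c\<^sup>2 * L) - (c * s * (1 - L))\<^sup>2)"
    by (simp add: power2_eq_square algebra_simps)
  moreover have "\<dots> > 0" using det_rot[OF cs, of L] e L by simp
  ultimately show "Xa \<alpha> p c s \<delta> * Xc \<alpha> p c s \<delta> - (Xb \<alpha> p c s \<delta>)\<^sup>2 > 0"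
    by (simp add: Xa_def Xb_def Xc_def e_def L_def)
qed

lemma Y_pos:
  assumes cs: "c\<^sup>2 + s\<^sup>2 = 1" and d: "\<delta> > 0" and a: "0 < \<alpha>" "\<alpha> < 1"
  shows "Ya \<alpha> q c s \<delta> + Yc \<alpha> q c s \<delta> > 0"
    "Ya \<alpha> q c s \<delta> * Yc \<alpha> q c s \<delta> - (Yb \<alpha> q c s \<delta>)\<^sup>2 > 0"
proof -
  define L where "L = \<delta> powr q"
  have L: "L > 0" using d by (auto simp: L_def)
  have p1: "c\<^sup>2 + s\<^sup>2 * L > 0" "s\<^sup>2 + c\<^sup>2 * L > 0" using pos_comb[OF cs L] by auto
  have "((1 - \<alpha>) * 1 + \<alpha> * (c\<^sup>2 + s\<^sup>2 * L)) + ((1 - \<alpha>) * L + \<alpha> * (s\<^sup>2 + c\<^sup>2 * L)) > 0"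
    using p1 a L by (intro add_pos_pos) (auto intro!: add_pos_pos)
  thus "Ya \<alpha> q c s \<delta> + Yc \<alpha> q c s \<delta> > 0" by (simp add: Ya_def Yc_def L_def)
  have "((1 - \<alpha>) * 1 + \<alpha> * (c\<^sup>2 + s\<^sup>2 * L)) * ((1 - \<alpha>) * L + \<alpha> * (s\<^sup>2 + c\<^sup>2 * L))
       - ((1 - \<alpha>) * 0 + \<alpha> * (c * s * (1 - L)))\<^sup>2
     = (1 - \<alpha>)\<^sup>2 * L + (1 - \<alpha>) * \<alpha> * ((s\<^sup>2 + c\<^sup>2 * L) + L * (c\<^sup>2 + s\<^sup>2 * L))
       + \<alpha>\<^sup>2 * ((c\<^sup>2 + s\<^sup>2 * L) * (s\<^sup>2 + c\<^sup>2 * L) - (c * s * (1 - L))\<^sup>2)"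
    by (simp add: power2_eq_square algebra_simps)
  moreover have "\<dots> > 0" unfolding det_rot[OF cs]
    using a L p1 by (intro add_pos_pos add_pos_nonneg mult_pos_pos mult_nonneg_nonneg) auto
  ultimately show "Ya \<alpha> q c s \<delta> * Yc \<alpha> q c s \<delta> - (Yb \<alpha> q c s \<delta>)\<^sup>2 > 0"
    by (simp add: Ya_def Yb_def Yc_def L_def)
qed

lemma R_trace:
  assumes cs: "c\<^sup>2 + s\<^sup>2 = 1" and d: "\<delta> > 0"
  shows "Re (cmat_trace (R_mean \<alpha> p (rs 1 0 \<delta>) (rs (c\<^sup>2 + s\<^sup>2 * \<delta>) (c * s * (1 - \<delta>)) (s\<^sup>2 + c\<^sup>2 * \<delta>))))
    = evp (Xa \<alpha> p c s \<delta>) (Xb \<alpha> p c s \<delta>) (Xc \<alpha> p c s \<delta>) powr (1 / p)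
    + evm (Xa \<alpha> p c s \<delta>) (Xb \<alpha> p c s \<delta>) (Xc \<alpha> p c s \<delta>) powr (1 / p)"
  unfolding R_mean_def powA[OF d] powB[OF cs d] sandwich
  using rs_trace_powr[OF X_pos[OF cs d, of \<alpha> p]] by (simp add: Xa_def Xb_def Xc_def)

lemma A_trace:
  assumes cs: "c\<^sup>2 + s\<^sup>2 = 1" and d: "\<delta> > 0" and a: "0 < \<alpha>" "\<alpha> < 1"
  shows "Re (cmat_trace (A_mean \<alpha> q (rs 1 0 \<delta>) (rs (c\<^sup>2 + s\<^sup>2 * \<delta>) (c * s * (1 - \<delta>)) (s\<^sup>2 + c\<^sup>2 * \<delta>))))
    = evp (Ya \<alpha> q c s \<delta>) (Yb \<alpha> q c s \<delta>) (Yc \<alpha> q c s \<delta>) powr (1 / q)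
    + evm (Ya \<alpha> q c s \<delta>) (Yb \<alpha> q c s \<delta>) (Yc \<alpha> q c s \<delta>) powr (1 / q)"
  unfolding A_mean_def powA[OF d] powB[OF cs d] rs_scaleR rs_plus
  using rs_trace_powr[OF Y_pos[OF cs d a, of q]] by (simp add: Ya_def Yb_def Yc_def)



lemma key_u:
  fixes k m r :: real
  assumes k: "k > 0" and m: "m > 0" and r: "r > 1" and mk: "m < k * r"
  shows "\<exists>u. 0 < u \<and> u < 1/2 \<and> u * (1 - u) / k < 1 \<and>
           (1 - u * (1 - u) / k) powr m > (1 - u) powr r + u powr r"
proof -
  define G where "G u = (1 - u * (1 - u) / k) powr m - (1 - u) powr r" for u
  have d1: "DERIV (\<lambda>u. 1 - u * (1 - u) / k) 0 :> - 1 / k"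
    using k by (auto intro!: derivative_eq_intros simp: field_simps)
  have d2: "DERIV (\<lambda>u. 1 - u) 0 :> - 1"
    by (auto intro!: derivative_eq_intros)
  have "DERIV G 0 :> m * (1 - 0 * (1 - 0) / k) powr (m - of_nat 1) * (- 1 / k) - r * (1 - 0) powr (r - of_nat 1) * (- 1)"
    unfolding G_def by (intro DERIV_diff DERIV_fun_powr d1 d2) simp_all
  moreover have "m * (1 - 0 * (1 - 0) / k) powr (m - of_nat 1) * (- 1 / k) - r * (1 - 0) powr (r - of_nat 1) * (- 1) = r - m / k"
    by simp
  ultimately have dG: "DERIV G 0 :> r - m / k" by simp
  have G0: "G 0 = 0" by (simp add: G_def)
  have l1: "((\<lambda>h. (G (0 + h) - G 0) / h) \<longlongrightarrow> r - m / k) (at_right 0)"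
    using DERIV_D[OF dG] by (rule tendsto_mono[OF at_le, rotated]) simp
  have l2: "((\<lambda>h::real. h powr (r - 1)) \<longlongrightarrow> 0) (at_right 0)"
    using r by (intro tendsto_zero_powrI tendsto_ident_at tendsto_const)
      (auto simp: eventually_at_right_less eventually_at_filter)
  have "((\<lambda>h. (G (0 + h) - G 0) / h - h powr (r - 1)) \<longlongrightarrow> r - m / k - 0) (at_right 0)"
    by (intro tendsto_diff l1 l2)
  moreover have "r - m / k - 0 > 0" using mk k by (simp add: field_simps)
  ultimately have ev1: "eventually (\<lambda>h. (G (0 + h) - G 0) / h - h powr (r - 1) > 0) (at_right 0)"
    by (rule order_tendstoD(1))
  have ev2: "eventually (\<lambda>h::real. 0 < h \<and> h < min (1/2) k) (at_right 0)"
    unfolding eventually_at_right_field using k by (intro exI[of _ "min (1/2) k"]) auto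
  have "eventually (\<lambda>h. (G (0 + h) - G 0) / h - h powr (r - 1) > 0 \<and> 0 < h \<and> h < min (1/2) k) (at_right 0)"
    using ev1 ev2 by (rule eventually_conj)
  then obtain u where u: "(G (0 + u) - G 0) / u - u powr (r - 1) > 0" "0 < u" "u < min (1/2) k"
    using eventually_happens[of _ "at_right (0::real)"] by auto
  have "G u / u > u powr (r - 1)" using u G0 by simp
  hence "G u > u * u powr (r - 1)" using u by (simp add: field_simps)
  also have "u * u powr (r - 1) = u powr r" using u by (simp add: powr_diff)
  finally have "G u > u powr r" .
  moreover have "u * (1 - u) / k < 1"
  proof -
    have "u * (1 - u) \<le> u * 1" using u by (intro mult_left_mono) auto
    hence "u * (1 - u) < k" using u(3) by linarith
    thus ?thesis using k by simp
  qed
  ultimately show ?thesis using u unfolding G_def by auto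
qed



lemma evp_tendsto: "(f \<longlongrightarrow> a) F \<Longrightarrow> (g \<longlongrightarrow> b) F \<Longrightarrow> (h \<longlongrightarrow> d) F \<Longrightarrow>
   ((\<lambda>x. evp (f x) (g x) (h x)) \<longlongrightarrow> evp a b d) F"
  unfolding evp_def by (intro tendsto_intros) simp_all

lemma evm_tendsto: "(f \<longlongrightarrow> a) F \<Longrightarrow> (g \<longlongrightarrow> b) F \<Longrightarrow> (h \<longlongrightarrow> d) F \<Longrightarrow>
   ((\<lambda>x. evm (f x) (g x) (h x)) \<longlongrightarrow> evm a b d) F"
  unfolding evm_def by (intro tendsto_intros) simp_all

lemma pow0: "t > 0 \<Longrightarrow> ((\<lambda>\<delta>::real. \<delta> powr t) \<longlongrightarrow> 0) (at_right 0)"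
  by (intro tendsto_zero_powrI tendsto_ident_at tendsto_const)
     (auto simp: eventually_at_right_less eventually_at_filter)

lemma ev_right: "eventually (\<lambda>\<delta>::real. \<delta> > 0) (at_right 0)"
  by (simp add: eventually_at_right_less)

theorem theorem4p12:
  fixes \<alpha> p q :: real
  assumes "0 < \<alpha>" and "\<alpha> < 1" and "0 < p" and "0 < q"
    and "\<forall>A B :: complex^2^2. cmat_posdef A \<longrightarrow> cmat_posdef B \<longrightarrow>
           Re (cmat_trace (R_mean \<alpha> p A B)) \<le> Re (cmat_trace (A_mean \<alpha> q A B))"
  shows "min 1 (\<alpha> * (1 - \<alpha>) * p) \<le> q"
proof (rule ccontr)
  assume "\<not> ?thesis"
  hence q1: "q < 1" and qk: "q < \<alpha> * (1 - \<alpha>) * p" by auto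
  define k where "k = \<alpha> * (1 - \<alpha>)"
  have k: "k > 0" using assms by (simp add: k_def)
  have r: "1 / q > 1" using q1 assms by simp
  have m: "1 / p > 0" using assms by simp
  have mk: "1 / p < k * (1 / q)" using qk assms k by (simp add: k_def field_simps)
  obtain u where u: "0 < u" "u < 1/2" "u * (1 - u) / k < 1"
     and ineq: "(1 - u * (1 - u) / k) powr (1/p) > (1 - u) powr (1/q) + u powr (1/q)"
    using key_u[OF k m r mk] by blast
  define s2 where "s2 = u * (1 - u) / k"
  have s2: "0 \<le> s2" "s2 < 1" using u k by (auto simp: s2_def)
  define s where "s = sqrt s2"
  define c where "c = sqrt (1 - s2)"
  have ss: "s\<^sup>2 = s2" and cc: "c\<^sup>2 = 1 - s2" using s2 by (auto simp: s_def c_def)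
  have cs: "c\<^sup>2 + s\<^sup>2 = 1" using ss cc by simp
  define FR where "FR \<delta> = evp (Xa \<alpha> p c s \<delta>) (Xb \<alpha> p c s \<delta>) (Xc \<alpha> p c s \<delta>) powr (1 / p)
    + evm (Xa \<alpha> p c s \<delta>) (Xb \<alpha> p c s \<delta>) (Xc \<alpha> p c s \<delta>) powr (1 / p)" for \<delta>
  define FA where "FA \<delta> = evp (Ya \<alpha> q c s \<delta>) (Yb \<alpha> q c s \<delta>) (Yc \<alpha> q c s \<delta>) powr (1 / q)
    + evm (Ya \<alpha> q c s \<delta>) (Yb \<alpha> q c s \<delta>) (Yc \<alpha> q c s \<delta>) powr (1 / q)" for \<delta>
  have le: "FR \<delta> \<le> FA \<delta>" if d: "\<delta> > 0" for \<delta>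
    using assms(5)[rule_format, OF posA[OF d] posB[OF cs d]]
    unfolding R_trace[OF cs d] A_trace[OF cs d assms(1,2)] FR_def FA_def .
  have ap: "\<alpha> * p > 0" "(1 - \<alpha>) * p / 2 > 0" using assms by auto
  have lXa: "((\<lambda>\<delta>. Xa \<alpha> p c s \<delta>) \<longlongrightarrow> c\<^sup>2 + s\<^sup>2 * 0) (at_right 0)"
    unfolding Xa_def by (intro tendsto_intros pow0 ap)
  have lXb: "((\<lambda>\<delta>. Xb \<alpha> p c s \<delta>) \<longlongrightarrow> 0 * (c * s * (1 - 0))) (at_right 0)"
    unfolding Xb_def by (intro tendsto_intros pow0 ap)
  have lXc: "((\<lambda>\<delta>. Xc \<alpha> p c s \<delta>) \<longlongrightarrow> 0 * 0 * (s\<^sup>2 + c\<^sup>2 * 0)) (at_right 0)"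
    unfolding Xc_def by (intro tendsto_intros pow0 ap)
  have evpX: "evp (c\<^sup>2 + s\<^sup>2 * 0) (0 * (c * s * (1 - 0))) (0 * 0 * (s\<^sup>2 + c\<^sup>2 * 0)) = c\<^sup>2"
  proof -
    have "(c\<^sup>2)\<^sup>2 = c ^ 4" by (simp flip: power_mult)
    hence "sqrt (c ^ 4) = c\<^sup>2" by (metis real_sqrt_abs abs_power2)
    thus ?thesis by (simp add: evp_def)
  qed
  have evmX: "evm (c\<^sup>2 + s\<^sup>2 * 0) (0 * (c * s * (1 - 0))) (0 * 0 * (s\<^sup>2 + c\<^sup>2 * 0)) = 0"
  proof -
    have "(c\<^sup>2)\<^sup>2 = c ^ 4" by (simp flip: power_mult)
    hence "sqrt (c ^ 4) = c\<^sup>2" by (metis real_sqrt_abs abs_power2)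
    thus ?thesis by (simp add: evm_def)
  qed
  have posX: "eventually (\<lambda>\<delta>. evp (Xa \<alpha> p c s \<delta>) (Xb \<alpha> p c s \<delta>) (Xc \<alpha> p c s \<delta>) \<ge> 0 \<and>
      evm (Xa \<alpha> p c s \<delta>) (Xb \<alpha> p c s \<delta>) (Xc \<alpha> p c s \<delta>) \<ge> 0) (at_right 0)"
    using ev_right by eventually_elim (use ev_pos[OF X_pos[OF cs]] in \<open>auto intro: less_imp_le\<close>)
  have limR: "(FR \<longlongrightarrow> (c\<^sup>2) powr (1/p) + 0 powr (1/p)) (at_right 0)"
    unfolding FR_def
    apply (intro tendsto_add tendsto_powr' tendsto_const)
       apply (rule evp_tendsto[OF lXa lXb lXc, unfolded evpX])
      apply (use m posX in \<open>auto elim: eventually_mono\<close>)[1]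
     apply (rule evm_tendsto[OF lXa lXb lXc, unfolded evmX])
    apply (use m posX in \<open>auto elim: eventually_mono\<close>)
    done
  have aq: "q > 0" using assms by simp
  have lYa: "((\<lambda>\<delta>. Ya \<alpha> q c s \<delta>) \<longlongrightarrow> (1 - \<alpha>) * 1 + \<alpha> * (c\<^sup>2 + s\<^sup>2 * 0)) (at_right 0)"
    unfolding Ya_def by (intro tendsto_intros pow0 aq)
  have lYb: "((\<lambda>\<delta>. Yb \<alpha> q c s \<delta>) \<longlongrightarrow> (1 - \<alpha>) * 0 + \<alpha> * (c * s * (1 - 0))) (at_right 0)"
    unfolding Yb_def by (intro tendsto_intros pow0 aq)
  have lYc: "((\<lambda>\<delta>. Yc \<alpha> q c s \<delta>) \<longlongrightarrow> (1 - \<alpha>) * 0 + \<alpha> * (s\<^sup>2 + c\<^sup>2 * 0)) (at_right 0)"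
    unfolding Yc_def by (intro tendsto_intros pow0 aq)
  define y1 where "y1 = (1 - \<alpha>) * 1 + \<alpha> * (c\<^sup>2 + s\<^sup>2 * 0)"
  define y2 where "y2 = (1 - \<alpha>) * 0 + \<alpha> * (c * s * (1 - 0))"
  define y3 where "y3 = (1 - \<alpha>) * 0 + \<alpha> * (s\<^sup>2 + c\<^sup>2 * 0)"
  have y13: "y1 + y3 = 1" using cs by (simp add: y1_def y3_def algebra_simps) (metis distrib_left mult_1_right)
  have ydet: "y1 * y3 - y2\<^sup>2 = u * (1 - u)"
  proof -
    have "y1 * y3 - y2\<^sup>2 = k * s\<^sup>2" using cs
      unfolding y1_def y2_def y3_def k_def by (simp add: power2_eq_square algebra_simps)
    thus ?thesis using ss k by (simp add: s2_def)
  qed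
  have disc: "(y1 - y3)\<^sup>2 + 4 * y2\<^sup>2 = (1 - 2 * u)\<^sup>2"
  proof -
    have "(y1 - y3)\<^sup>2 + 4 * y2\<^sup>2 = (y1 + y3)\<^sup>2 - 4 * (y1 * y3 - y2\<^sup>2)"
      by (simp add: power2_eq_square algebra_simps)
    thus ?thesis using y13 ydet by (simp add: power2_eq_square algebra_simps)
  qed
  have sq: "sqrt ((y1 - y3)\<^sup>2 + 4 * y2\<^sup>2) = 1 - 2 * u" using disc u by simp
  have evpY: "evp y1 y2 y3 = 1 - u" unfolding evp_def sq using y13 by simp
  have evmY: "evm y1 y2 y3 = u" unfolding evm_def sq using y13 by simp
  have posY: "eventually (\<lambda>\<delta>. evp (Ya \<alpha> q c s \<delta>) (Yb \<alpha> q c s \<delta>) (Yc \<alpha> q c s \<delta>) \<ge> 0 \<and>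
      evm (Ya \<alpha> q c s \<delta>) (Yb \<alpha> q c s \<delta>) (Yc \<alpha> q c s \<delta>) \<ge> 0) (at_right 0)"
    using ev_right by eventually_elim (use ev_pos[OF Y_pos[OF cs _ assms(1,2)]] in \<open>auto intro: less_imp_le\<close>)
  have mq: "1 / q > 0" using assms by simp
  have limA: "(FA \<longlongrightarrow> (1 - u) powr (1/q) + u powr (1/q)) (at_right 0)"
    unfolding FA_def
    apply (intro tendsto_add tendsto_powr' tendsto_const)
       apply (rule evp_tendsto[OF lYa lYb lYc, folded y1_def y2_def y3_def, unfolded evpY])
      apply (use mq posY in \<open>auto elim: eventually_mono\<close>)[1]
     apply (rule evm_tendsto[OF lYa lYb lYc, folded y1_def y2_def y3_def, unfolded evmY])
    apply (use mq posY in \<open>auto elim: eventually_mono\<close>)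
    done
  have "(c\<^sup>2) powr (1/p) + 0 powr (1/p) \<le> (1 - u) powr (1/q) + u powr (1/q)"
    using limA limR by (rule tendsto_le[OF trivial_limit_at_right_real]) (use ev_right le in \<open>auto elim: eventually_mono\<close>)
  moreover have "c\<^sup>2 = 1 - u * (1 - u) / k" using cc by (simp add: s2_def)
  ultimately show False using ineq by simp
qed

end
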